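(* There exists a $2$-adic fractal string $\mathcal{CS}_2\subseteq\mathbb{Z}_2$ of Minkowski--Bouligand dimension $D=0$ and with oscillatory period $\mathbf{p}=\frac{2\pi}{\log 2}$; that is, its geometric zeta function extends meromorphically to $\mathbb{C}$, its set of poles (complex dimensions) is exactly $\{\frac{2\pi i n}{\log 2}: n\in\mathbb{Z}\}$, and $0$ is the abscissa of convergence of the series defining the geometric zeta function.
   Context: Let $\mathbb{Z}_2$ be the ring of $2$-adic integers with $|2|_2=\frac12$. A $2$-adic fractal string $\mathcal{L}$ in $\mathbb{Z}_2$ is a countable disjoint union of balls $a+2^n\mathbb{Z}_2$ ($a\in\mathbb{Z}_2$, $n\ge1$) contained in $\mathbb{Z}_2$; such a ball has length $2^{-n}$, and $\mathcal{L}$ is encoded by its sequence of lengths $l_j$ counted with multiplicity. Its geometric zeta function is $\zeta_{\mathcal{L}}(s)=\sum_j l_j^s$ for $\Re(s)$ large, meromorphically continued to $\mathbb{C}$ when possible; the complex dimensions are the poles of this continuation; the Minkowski--Bouligand dimension $D$ is the abscissa of convergence of $\sum_j l_j^s$; the oscillatory period is $\mathbf{p}>0$ if the set of complex dimensions is exactly $\{D+in\mathbf{p}:n\in\mathbb{Z}\}$. *)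

theory Defs
  imports "HOL-Complex_Analysis.Complex_Analysis"
begin

text \<open>2-adic integers represented by their binary digit expansions:
  x = sum_k x_k 2^k.  The ball a + 2^n Z_2 is the set of 2-adic integers
  whose first n digits agree with those of a.\<close>

type_synonym Z2 = "nat \<Rightarrow> bool"

definition ball2 :: "Z2 \<Rightarrow> nat \<Rightarrow> Z2 set" where
  "ball2 a n = {x. \<forall>k<n. x k = a k}"

definition padic_fractal_string :: "nat set \<Rightarrow> (nat \<Rightarrow> Z2) \<Rightarrow> (nat \<Rightarrow> nat) \<Rightarrow> bool" where
  "padic_fractal_string J a n \<longleftrightarrow>
     (\<forall>j\<in>J. n j \<ge> 1) \<and>
     (\<forall>i\<in>J. \<forall>j\<in>J. i \<noteq> j \<longrightarrow> ball2 (a i) (n i) \<inter> ball2 (a j) (n j) = {})"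

definition ball_length :: "nat \<Rightarrow> real" where
  "ball_length n = (1/2) ^ n"

definition abscissa_of_convergence :: "nat set \<Rightarrow> (nat \<Rightarrow> real) \<Rightarrow> real \<Rightarrow> bool" where
  "abscissa_of_convergence J l D \<longleftrightarrow>
     (\<forall>\<sigma>>D. (\<lambda>j. l j powr \<sigma>) summable_on J) \<and>
     (\<forall>\<sigma><D. \<not> ((\<lambda>j. l j powr \<sigma>) summable_on J))"

end

theory Submission
  imports Defs
begin

lemma real_term: "ball_length (Suc j) powr \<sigma> = ((1/2::real) powr \<sigma>) ^ Suc j"
proof -
  have "((1/2::real)^n) powr s = ((1/2) powr s)^n" for n s
  proof -
    have "((1/2::real)^n) powr s = ((1/2) powr real n) powr s" by (simp add: powr_realpow)
    also have "... = ((1/2) powr s) powr real n" by (simp add: powr_powr mult.commute)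
    also have "... = ((1/2) powr s)^n" by (simp add: powr_realpow)
    finally show ?thesis .
  qed
  then show ?thesis unfolding ball_length_def by blast
qed

lemma abscissa_part: "abscissa_of_convergence UNIV (\<lambda>j. ball_length (Suc j)) 0"
  unfolding abscissa_of_convergence_def
proof (intro conjI allI impI)
  fix \<sigma> :: real assume "\<sigma> > 0"
  have q: "(1/2::real) powr \<sigma> < 1" using \<open>\<sigma> > 0\<close> by (simp add: powr01_less_one)
  have "summable (\<lambda>j. ((1/2::real) powr \<sigma>) ^ Suc j)"
    using q by (subst summable_Suc_iff) (simp add: summable_geometric)
  then show "(\<lambda>j. ball_length (Suc j) powr \<sigma>) summable_on UNIV"
    by (subst summable_on_UNIV_nonneg_real_iff) (auto simp: real_term)
next
  fix \<sigma> :: real assume "\<sigma> < 0"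
  have q: "(1/2::real) powr \<sigma> > 1" using \<open>\<sigma> < 0\<close> by (simp add: powr_divide powr_less_one)
  show "\<not> (\<lambda>j. ball_length (Suc j) powr \<sigma>) summable_on UNIV"
  proof
    assume "(\<lambda>j. ball_length (Suc j) powr \<sigma>) summable_on UNIV"
    then have "summable (\<lambda>j. ((1/2::real) powr \<sigma>) ^ Suc j)"
      by (subst (asm) summable_on_UNIV_nonneg_real_iff) (auto simp: real_term)
    then have "(\<lambda>j. ((1/2::real) powr \<sigma>) ^ Suc j) \<longlonglongrightarrow> 0"
      by (rule summable_LIMSEQ_zero)
    moreover have "\<forall>j. ((1/2::real) powr \<sigma>) ^ Suc j \<ge> 1"
      using q by (simp add: one_le_power less_imp_le del: power_Suc)
    ultimately show False
      by (metis LIMSEQ_le_const zero_less_one not_le)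
  qed
qed

definition LL :: complex where "LL = complex_of_real (ln 2)"
definition Z :: "complex \<Rightarrow> complex" where "Z s = 1 / (exp (s * LL) - 1)"

lemma cterm: "complex_of_real (ball_length (Suc j)) powr s = exp (- s * LL) ^ Suc j"
proof -
  have pos: "ball_length (Suc j) > 0" by (simp add: ball_length_def)
  have ln: "ln (ball_length (Suc j)) = - (real (Suc j) * ln 2)"
    unfolding ball_length_def by (simp add: ln_realpow ln_div algebra_simps)
  have "complex_of_real (ball_length (Suc j)) powr s = exp (s * Ln (complex_of_real (ball_length (Suc j))))"
    using pos by (simp add: powr_def)
  also have "... = exp (s * complex_of_real (ln (ball_length (Suc j))))"
    using pos by (simp add: Ln_of_real)
  also have "... = exp (of_nat (Suc j) * (- s * LL))"
    unfolding ln LL_def by (simp add: algebra_simps)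
  also have "... = exp (- s * LL) ^ Suc j" by (rule exp_of_nat_mult)
  finally show ?thesis .
qed

lemma csum: assumes "Re s > 0"
  shows "((\<lambda>j. complex_of_real (ball_length (Suc j)) powr s) has_sum Z s) UNIV"
proof -
  define w where "w = exp (- s * LL)"
  have nw: "norm w < 1" unfolding w_def LL_def using assms by simp
  have w0: "w \<noteq> 0" unfolding w_def by simp
  have "(\<lambda>j. w * w ^ j) sums (w * (1 / (1 - w)))"
    by (rule sums_mult) (rule geometric_sums[OF nw])
  moreover have "w * (1 / (1 - w)) = Z s"
  proof -
    have e: "exp (s * LL) = 1 / w" unfolding w_def by (simp add: exp_minus field_simps)
    show ?thesis unfolding Z_def e using w0 nw by (auto simp: field_simps)
  qed
  ultimately have S: "(\<lambda>j. w ^ Suc j) sums Z s" by simp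
  have "summable (\<lambda>j. norm (w ^ Suc j))"
    using nw by (subst summable_Suc_iff) (simp add: norm_power summable_geometric)
  from norm_summable_imp_has_sum[OF this S] show ?thesis
    unfolding cterm w_def .
qed

lemma LL_pos: "Re LL > 0" "Im LL = 0" "LL \<noteq> 0" unfolding LL_def by auto

lemma zero_iff: "exp (z*LL) = 1 \<longleftrightarrow> (\<exists>k::int. z = 2*pi*\<i> * of_int k / LL)"
proof
  assume "exp (z*LL) = 1"
  then obtain n :: int where h: "Re (z*LL) = 0" "Im (z*LL) = of_int (2*n) * pi"
    by (auto simp: exp_eq_1)
  have l: "ln (2::real) > 0" by simp
  have "Re z = 0" "Im z = 2*n*pi / ln 2" using h l by (auto simp: LL_def field_simps)
  then have "z = 2*pi*\<i> * of_int n / LL"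
    using l by (auto simp: LL_def complex_eq_iff)
  then show "\<exists>k::int. z = 2*pi*\<i> * of_int k / LL" by blast
next
  assume "\<exists>k::int. z = 2*pi*\<i> * of_int k / LL"
  then obtain k :: int where "z = 2*pi*\<i> * of_int k / LL" by blast
  then have "z * LL = 2*pi*\<i> * of_int k" using LL_pos by auto
  then show "exp (z*LL) = 1" by (simp add: exp_eq_1)
qed

lemma pole_iff: "is_pole Z z \<longleftrightarrow> exp (z*LL) = 1"
proof
  assume p: "is_pole Z z"
  show "exp (z*LL) = 1"
  proof (rule ccontr)
    assume "exp (z*LL) \<noteq> 1"
    then have "Z analytic_on {z}" unfolding Z_def by (intro analytic_intros) auto
    then show False using p analytic_at_imp_no_pole by blast
  qed
next
  assume z: "exp (z*LL) = 1"
  define g where "g w = exp (w*LL) - 1" for w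
  have hg: "g holomorphic_on UNIV" unfolding g_def by (intro holomorphic_intros)
  have "g 1 \<noteq> 0" unfolding g_def LL_def by (simp add: exp_of_real)
  then have ev: "\<forall>\<^sub>F w in at z. g w \<noteq> 0 \<and> w \<in> UNIV"
    by (intro non_zero_neighbour_alt[OF hg]) auto
  have "continuous_on UNIV g" using hg holomorphic_on_imp_continuous_on by blast
  then have "isCont g z" by (simp add: continuous_on_eq_continuous_at)
  then have "(g \<longlongrightarrow> g z) (at z)" by (simp add: isCont_def)
  then have "(g \<longlongrightarrow> 0) (at z)" using z by (simp add: g_def)
  then have "filterlim g (at 0) (at z)"
    by (rule filterlim_atI) (use ev in \<open>auto elim: eventually_mono\<close>)
  then have "is_pole (\<lambda>w. 1 / g w) z" by (intro is_pole_divide) auto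
  moreover have "(\<lambda>w. 1 / g w) = Z" by (auto simp: Z_def g_def)
  ultimately show "is_pole Z z" by simp
qed

lemma Z_mero: "Z meromorphic_on UNIV"
proof -
  have "(\<lambda>w. exp (w*LL) - 1) meromorphic_on UNIV"
    by (intro analytic_on_imp_meromorphic_on analytic_intros)
  then have "(\<lambda>w. inverse (exp (w*LL) - 1)) meromorphic_on UNIV"
    by (rule meromorphic_on_inverse)
  then show ?thesis unfolding Z_def by (simp add: inverse_eq_divide)
qed

theorem lemma4p1:
  shows "\<exists>(J::nat set) (a::nat \<Rightarrow> Z2) (n::nat \<Rightarrow> nat).
    padic_fractal_string J a n \<and>
    abscissa_of_convergence J (\<lambda>j. ball_length (n j)) 0 \<and>
    (\<exists>\<zeta>::complex \<Rightarrow> complex.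
       \<zeta> meromorphic_on UNIV \<and>
       (\<forall>s. Re s > 0 \<longrightarrow>
          ((\<lambda>j. complex_of_real (ball_length (n j)) powr s) has_sum \<zeta> s) J) \<and>
       {z. is_pole \<zeta> z} = {2 * pi * \<i> * of_int k / complex_of_real (ln 2) | k. k \<in> (UNIV :: int set)})"
proof (intro exI conjI)
  show "padic_fractal_string UNIV (\<lambda>j k. k = j) Suc"
    unfolding padic_fractal_string_def ball2_def
  proof (intro conjI ballI impI)
    fix i j :: nat assume "i \<noteq> j"
    show "{x. \<forall>k<Suc i. x k = (k = i)} \<inter> {x. \<forall>k<Suc j. x k = (k = j)} = {}"
    proof (rule ccontr)
      assume "\<not> ?thesis"
      then obtain x where x: "\<forall>k<Suc i. x k = (k = i)" "\<forall>k<Suc j. x k = (k = j)" by blast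
      show False
      proof (cases "i < j")
        case True
        then have "x i = (i = j)" using x(2) by simp
        moreover have "x i" using x(1) by simp
        ultimately show False using \<open>i \<noteq> j\<close> by simp
      next
        case False
        then have "j < i" using \<open>i \<noteq> j\<close> by simp
        then have "x j = (j = i)" using x(1) by simp
        moreover have "x j" using x(2) by simp
        ultimately show False using \<open>i \<noteq> j\<close> by simp
      qed
    qed
  qed auto
  show "abscissa_of_convergence UNIV (\<lambda>j. ball_length (Suc j)) 0" by (rule abscissa_part)
  show "Z meromorphic_on UNIV" by (rule Z_mero)
  show "\<forall>s. Re s > 0 \<longrightarrow>
          ((\<lambda>j. complex_of_real (ball_length (Suc j)) powr s) has_sum Z s) UNIV"
    using csum by blast
  show "{z. is_pole Z z} = {2 * pi * \<i> * of_int k / complex_of_real (ln 2) | k. k \<in> (UNIV :: int set)}"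
    using pole_iff zero_iff unfolding LL_def by auto
qed

end
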